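(* Let $p,q$ be odd primes, $m\in\mathbb{N}$ and $k\in\{0,1,\dots,m\}$. Suppose there exist $u,v\in\mathbb{Z}$ with $\gcd(u,v)=1$ such that either $$u+\delta_4 v=q^k \text{ and } H_p(u,v)=q^{m-k},$$ or $$u+\delta_4 v=-q^k \text{ and } H_p(u,v)=-q^{m-k}.$$ Then $k=0$, or ($k=m$ and $p\ne q$), or ($k=m-1$ and $p=q$).
   Context: For an odd prime $p$ put $\delta_4=1$ if $p\equiv 1\pmod 4$, $\delta_4=-1$ if $p\equiv 3\pmod 4$. Let $G_p(u,v)=\mathrm{Im}\big((1+i)(u+iv)^p\big)\in\mathbb{Z}[u,v]$ (for real $u,v$); $u+\delta_4 v$ divides $G_p$ in $\mathbb{Z}[u,v]$, and $H_p(u,v):=G_p(u,v)/(u+\delta_4 v)\in\mathbb{Z}[u,v]$. $\mathbb{N}$ denotes the positive integers. *)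

theory Defs
  imports Complex_Main "HOL-Computational_Algebra.Primes"
begin

definition delta4 :: "nat \<Rightarrow> int" where
  "delta4 p = (if p mod 4 = 1 then 1 else -1)"

definition Gp :: "nat \<Rightarrow> int \<Rightarrow> int \<Rightarrow> real" where
  "Gp p u v = Im ((1 + \<i>) * (of_int u + \<i> * of_int v) ^ p)"

text \<open>H_p(u,v) = G_p(u,v)/(u + delta4 v); this agrees with the value of the
  polynomial quotient whenever u + delta4 v is nonzero (the only case used).\<close>
definition Hp :: "nat \<Rightarrow> int \<Rightarrow> int \<Rightarrow> real" where
  "Hp p u v = Gp p u v / of_int (u + delta4 p * v)"

end

theory Submission
  imports Defs
begin

fun wr :: "int \<Rightarrow> nat \<Rightarrow> int \<times> int" where
  "wr d 0 = (1, 0)"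
| "wr d (Suc n) = (-d * fst (wr d n) - snd (wr d n), fst (wr d n) - d * snd (wr d n))"

definition Aw :: "int \<Rightarrow> nat \<Rightarrow> int" where
  "Aw d n = fst (wr d n) + snd (wr d n)"

lemma wr_pow: "(\<i> - of_int d) ^ n = Complex (of_int (fst (wr d n))) (of_int (snd (wr d n)))"
  by (induction n) (auto simp: complex_eq_iff algebra_simps)

lemma Aw_Im: "Im ((1 + \<i>) * (\<i> - of_int d) ^ n) = of_int (Aw d n)"
  by (simp add: wr_pow Aw_def)

lemma term_Im:
  fixes c :: nat and s v :: int
  shows "Im (of_nat c * of_int s ^ j * (of_int v * (\<i> - of_int d)) ^ (n) * (1 + \<i>))
     = of_int (int c * s ^ j * v ^ n * Aw d n)"
proof -
  have "of_nat c * of_int s ^ j * (of_int v * (\<i> - of_int d)) ^ (n) * (1 + \<i>)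
     = complex_of_real (of_int (int c * s ^ j * v ^ n)) * ((1 + \<i>) * (\<i> - of_int d) ^ n)"
    by (simp add: power_mult_distrib)
  also have "Im \<dots> = of_int (int c * s ^ j * v ^ n) * of_int (Aw d n)"
    by (simp only: Aw_Im[symmetric]) simp
  finally show ?thesis by simp
qed

lemma Gp_sum:
  "Gp p u v = of_int (\<Sum>j\<le>p. int (p choose j) * (u + d*v) ^ j * v ^ (p - j) * Aw d (p - j))"
proof -
  have z: "of_int u + \<i> * of_int v = of_int (u + d*v) + of_int v * (\<i> - of_int d)"
    by (simp add: algebra_simps)
  have "(1 + \<i>) * (of_int u + \<i> * of_int v) ^ p = (\<Sum>j\<le>p. of_nat (p choose j) * of_int (u + d*v) ^ j * (of_int v * (\<i> - of_int d)) ^ (p - j) * (1 + \<i>))"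
    unfolding z binomial_ring by (simp add: sum_distrib_left mult.commute)
  then have "Gp p u v = (\<Sum>j\<le>p. Im (of_nat (p choose j) * of_int (u + d*v) ^ j * (of_int v * (\<i> - of_int d)) ^ (p - j) * (1 + \<i>)))"
    by (simp add: Gp_def Im_sum)
  also have "\<dots> = (\<Sum>j\<le>p. of_int (int (p choose j) * (u + d*v) ^ j * v ^ (p - j) * Aw d (p - j)))"
    by (simp only: term_Im)
  finally show ?thesis by simp
qed


lemma Aw_vals1: "Aw 1 (4*t+1) = 0" "Aw 1 (4*t) = (-4)^t"
proof -
  have h4: "(\<i> - of_int 1 :: complex) ^ 4 = -4"
    by (simp add: numeral_eq_Suc algebra_simps)
  have "(\<i> - of_int 1 :: complex) ^ (4*t) = (-4)^t" by (metis power_mult h4)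
  then have e: "(\<i> - of_int 1 :: complex) ^ (4*t) = of_real ((-4)^t)" by simp
  have "of_int (Aw 1 (4*t+1)) = Im ((1 + \<i>) * (\<i> - of_int 1) * (\<i> - of_int 1) ^ (4*t))"
    by (simp only: Aw_Im[symmetric] power_add power_one_right mult.assoc mult.commute)
  also have "\<dots> = 0" unfolding e by (simp add: complex_eq_iff)
  finally show "Aw 1 (4*t+1) = 0" by simp
  have "of_int (Aw 1 (4*t)) = Im ((1 + \<i>) * (\<i> - of_int 1) ^ (4*t))"
    by (simp only: Aw_Im[symmetric])
  also have "\<dots> = (-4)^t" unfolding e by (simp add: complex_eq_iff)
  finally have "of_int (Aw 1 (4*t)) = (of_int ((-4)^t) :: real)" by simp
  then show "Aw 1 (4*t) = (-4)^t" by (simp only: of_int_eq_iff)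
qed

lemma Aw_vals3: "Aw (-1) (4*t+3) = 0" "Aw (-1) (4*t+2) = 2*(-4)^t"
proof -
  have w: "(\<i> - of_int (-1) :: complex) = 1 + \<i>" by simp
  have h4: "(1 + \<i> :: complex) ^ 4 = -4"
    by (simp add: numeral_eq_Suc algebra_simps)
  have h3: "(1 + \<i> :: complex) ^ 3 = -2 + 2*\<i>"
    by (simp add: numeral_eq_Suc algebra_simps)
  have h2: "(1 + \<i> :: complex) ^ 2 = 2*\<i>"
    by (simp add: numeral_eq_Suc algebra_simps)
  have "(1 + \<i> :: complex) ^ (4*t) = (-4)^t" by (metis power_mult h4)
  then have e: "(1 + \<i> :: complex) ^ (4*t) = of_real ((-4)^t)" by simp
  have "of_int (Aw (-1) (4*t+3)) = Im ((1 + \<i>) * ((1 + \<i>) ^ (4*t) * (1 + \<i>) ^ 3))"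
    unfolding Aw_Im[symmetric] power_add w by (rule refl)
  also have "\<dots> = Im ((1 + \<i>) * (of_real ((-4)^t) * (-2 + 2*\<i>)))" unfolding e h3 by (rule refl)
  also have "\<dots> = 0" by (simp add: complex_eq_iff)
  finally show "Aw (-1) (4*t+3) = 0" by simp
  have "of_int (Aw (-1) (4*t+2)) = Im ((1 + \<i>) * ((1 + \<i>) ^ (4*t) * (1 + \<i>) ^ 2))"
    unfolding Aw_Im[symmetric] power_add w by (rule refl)
  also have "\<dots> = Im ((1 + \<i>) * (of_real ((-4)^t) * (2*\<i>)))" unfolding e h2 by (rule refl)
  also have "\<dots> = 2*(-4)^t" by (simp add: complex_eq_iff)
  finally have "of_int (Aw (-1) (4*t+2)) = (of_int (2*(-4)^t) :: real)" by simp
  then show "Aw (-1) (4*t+2) = 2*(-4)^t" by (simp only: of_int_eq_iff)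
qed


lemma decomp:
  fixes p n :: nat and s v d :: int
  assumes "p = Suc (Suc n)" "Aw d p = 0"
  shows "(\<Sum>j\<le>p. int (p choose j) * s^j * v^(p-j) * Aw d (p-j)) =
     s * (int p * v^(p-1) * Aw d (p-1) + (\<Sum>i\<le>n. int (p choose (i+2)) * s^(i+1) * v^(n-i) * Aw d (n-i)))"
proof -
  define f where "f j = int (p choose j) * s^j * v^(p-j) * Aw d (p-j)" for j
  have "(\<Sum>j\<le>p. f j) = f 0 + (f 1 + (\<Sum>i\<le>n. f (Suc (Suc i))))"
    unfolding assms(1) sum.atMost_Suc_shift by simp
  also have "f 0 = 0" using assms by (simp add: f_def)
  also have "f 1 = s * (int p * v^(p-1) * Aw d (p-1))" by (simp add: f_def)
  also have "(\<Sum>i\<le>n. f (Suc (Suc i))) = s * (\<Sum>i\<le>n. int (p choose (i+2)) * s^(i+1) * v^(n-i) * Aw d (n-i))"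
    unfolding sum_distrib_left by (rule sum.cong) (auto simp: f_def assms(1))
  finally show ?thesis unfolding f_def by (simp add: algebra_simps)
qed

lemma R_dvd1:
  fixes s v d :: int
  shows "s dvd (\<Sum>i\<le>n. int (p choose (i+2)) * s^(i+1) * v^(n-i) * Aw d (n-i))"
  by (intro dvd_sum) simp

lemma R_dvd2:
  fixes s v d :: int
  assumes "prime p" "p = Suc (Suc n)" "n \<ge> 1" "int p dvd s"
  shows "(int p)^2 dvd (\<Sum>i\<le>n. int (p choose (i+2)) * s^(i+1) * v^(n-i) * Aw d (n-i))"
proof (intro dvd_sum)
  fix i assume i: "i \<in> {..n}"
  show "(int p)^2 dvd int (p choose (i+2)) * s^(i+1) * v^(n-i) * Aw d (n-i)"
  proof (cases "i < n")
    case True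
    have "p dvd (p choose (i+2))" using dvd_choose_prime[of "i+2" p] True assms by simp
    then have a: "int p dvd int (p choose (i+2))" by simp
    have b: "int p dvd s^(i+1)" using assms(4) by simp
    have "(int p)^2 dvd int (p choose (i+2)) * s^(i+1)"
      using mult_dvd_mono[OF a b] by (simp add: power2_eq_square)
    then show ?thesis by (metis dvd_mult2)
  next
    case False
    then have "i = n" using i by simp
    have "(int p)^2 dvd s^2" using assms(4) by simp
    moreover have "s^2 dvd s^(i+1)" using \<open>i = n\<close> assms(3) by (intro le_imp_power_dvd) simp
    ultimately have "(int p)^2 dvd s^(i+1)" by (rule dvd_trans)
    then show ?thesis by simp
  qed
qed


lemma odd_prime_not_dvd_pow2:
  fixes r :: int and a :: int
  assumes "prime r" "odd r" "a = (-4)^t \<or> a = 2*(-4)^t"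
  shows "\<not> r dvd a"
proof
  assume rd: "r dvd a"
  have "a = (-1)^t * 2^(2*t) \<or> a = (-1)^t * 2^(2*t+1)"
    using assms(3) by (auto simp: power_mult power_mult_distrib[symmetric])
  then obtain e where "r dvd (-1)^t * 2^e" using rd by blast
  then have "r dvd 2^e" by (simp add: dvd_mult_unit_iff' is_unit_power_iff)
  then have "r dvd 2" using assms(1) prime_dvd_power by blast
  then have "r \<le> 2" by (simp add: zdvd_imp_le)
  moreover have "r \<ge> 2" using assms(1) prime_ge_2_int by blast
  ultimately show False using assms(2) by simp
qed

theorem lemma6:
  fixes p q m k :: nat
  assumes "prime p" "odd p" "prime q" "odd q" "m \<ge> 1" "k \<le> m"
    and "\<exists>u v :: int. gcd u v = 1 \<and>
          ((u + delta4 p * v = int q ^ k \<and> Hp p u v = real q ^ (m - k)) \<or>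
           (u + delta4 p * v = - (int q ^ k) \<and> Hp p u v = - (real q ^ (m - k))))"
  shows "k = 0 \<or> (k = m \<and> p \<noteq> q) \<or> (k = m - 1 \<and> p = q)"
proof -
  obtain u v :: int where g: "gcd u v = 1" and
    hyp: "(u + delta4 p * v = int q ^ k \<and> Hp p u v = real q ^ (m - k)) \<or>
           (u + delta4 p * v = - (int q ^ k) \<and> Hp p u v = - (real q ^ (m - k)))"
    using assms(7) by (elim exE conjE) (rule that)
  define d where "d = delta4 p"
  define s where "s = u + d * v"
  define a where "a = Aw d (p-1)"
  have p2: "p \<ge> 2" using assms(1) prime_ge_2_nat by blast
  have "p \<noteq> 2" using assms(2) by auto
  with p2 have p3: "p \<ge> 3" by simp
  define n where "n = p - 2"
  have pn: "p = Suc (Suc n)" using p3 by (simp add: n_def)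
  have n1: "n \<ge> 1" using p3 by (simp add: n_def)
  have Aw0: "Aw d p = 0 \<and> (\<exists>t. a = (-4)^t \<or> a = 2*(-4)^t)"
  proof -
    have "p mod 4 = 1 \<or> p mod 4 = 3" using assms(2) by presburger
    then show ?thesis
    proof
      assume h: "p mod 4 = 1"
      then have "d = 1" by (simp add: d_def delta4_def)
      moreover obtain t where pt: "p = 4 * t + 1" using h by (metis div_mult_mod_eq mult.commute)
      ultimately show ?thesis unfolding a_def pt using Aw_vals1[of t] by auto
    next
      assume h: "p mod 4 = 3"
      then have "d = -1" by (simp add: d_def delta4_def)
      moreover obtain t where pt: "p = 4 * t + 3" using h by (metis div_mult_mod_eq mult.commute)
      moreover have "4 * t + 3 - 1 = 4 * t + 2" by simp
      ultimately show ?thesis unfolding a_def pt using Aw_vals3[of t] by auto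
    qed
  qed
  define R where "R = (\<Sum>i\<le>n. int (p choose (i+2)) * s^(i+1) * v^(n-i) * Aw d (n-i))"
  define HI where "HI = int p * v^(p-1) * a + R"
  have GI: "Gp p u v = of_int (s * HI)"
    unfolding Gp_sum[of p u v d] HI_def R_def a_def s_def using decomp[OF pn] Aw0 by simp
  obtain \<sigma> :: int where sig: "\<sigma> = 1 \<or> \<sigma> = -1" and sq: "s = \<sigma> * int q ^ k"
    and hq: "Hp p u v = of_int (\<sigma> * int q ^ (m - k))"
    using hyp unfolding s_def d_def
  proof
    assume h: "u + delta4 p * v = int q ^ k \<and> Hp p u v = real q ^ (m - k)"
    show thesis by (rule that[of 1]) (use h in \<open>simp_all add: s_def d_def\<close>)
  next
    assume h: "u + delta4 p * v = - (int q ^ k) \<and> Hp p u v = - (real q ^ (m - k))"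
    show thesis by (rule that[of "-1"]) (use h in \<open>simp_all add: s_def d_def\<close>)
  qed
  have snz: "s \<noteq> 0" using sq sig assms(3) by (auto simp: prime_gt_0_nat)
  have "Hp p u v = of_int (s*HI) / of_int s" unfolding Hp_def GI s_def d_def by (rule refl)
  then have "Hp p u v = of_int HI" using snz by simp
  then have "(of_int HI :: real) = of_int (\<sigma> * int q ^ (m - k))" using hq by (metis)
  then have HIeq: "HI = \<sigma> * int q ^ (m - k)" by (simp only: of_int_eq_iff)
  show ?thesis
  proof (cases "k = 0")
    case True then show ?thesis by simp
  next
    case k0: False
    have qp: "prime (int q)" using assms(3) by simp
    have qs: "int q dvd s" using sq k0 by simp
    have qv: "\<not> int q dvd v"
    proof
      assume "int q dvd v"
      moreover have "u = s - d * v" by (simp add: s_def)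
      ultimately have "int q dvd u" using qs by simp
      with \<open>int q dvd v\<close> have "int q dvd gcd u v" by simp
      then show False using g qp by (simp add: prime_int_iff)
    qed
    obtain t where "a = (-4)^t \<or> a = 2*(-4)^t" using Aw0 by blast
    then have qa: "\<not> int q dvd a" using odd_prime_not_dvd_pow2[OF qp, of a t] assms(4) by simp
    have "s dvd R" unfolding R_def by (rule R_dvd1)
    then have qR: "int q dvd R" using qs by (rule dvd_trans[rotated])
    show ?thesis
    proof (cases "k = m")
      case True
      have "p \<noteq> q"
      proof
        assume "p = q"
        have "HI = \<sigma>" using HIeq True by simp
        moreover have "int p dvd HI" unfolding HI_def using qR \<open>p = q\<close> by simp
        ultimately show False using sig assms(1) by auto
      qed
      then show ?thesis using True by simp
    next
      case False
      then have km: "k < m" using assms(6) by simp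
      have "int q dvd HI" using HIeq km by simp
      then have "int q dvd int p * v^(p-1) * a" unfolding HI_def using qR by (simp add: dvd_add_left_iff)
      then have "int q dvd int p \<or> int q dvd v^(p-1) \<or> int q dvd a" using qp by (simp add: prime_dvd_mult_iff)
      then have "int q dvd int p" using qa qv prime_dvd_power[OF qp] by blast
      then have "q dvd p" by simp
      then have pq: "p = q" using primes_dvd_imp_eq[OF assms(3) assms(1)] by simp
      have "k = m - 1"
      proof (rule ccontr)
        assume "k \<noteq> m - 1"
        then have "m - k \<ge> 2" using km by simp
        then have "(int p)^2 dvd HI" using HIeq pq by (simp add: le_imp_power_dvd)
        moreover have "(int p)^2 dvd R" unfolding R_def using R_dvd2[OF assms(1) pn n1] qs pq by simp
        ultimately have "(int p)^2 dvd int p * (v^(p-1) * a)" unfolding HI_def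
          by (simp add: dvd_add_left_iff mult.assoc)
        then have "int p dvd v^(p-1) * a" using p2 by (simp add: power2_eq_square)
        then have "int q dvd v^(p-1) \<or> int q dvd a" using qp pq by (simp add: prime_dvd_mult_iff)
        then show False using qa qv prime_dvd_power[OF qp] by blast
      qed
      then show ?thesis using pq by simp
    qed
  qed
qed

end
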